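(* Fix $u_{\max}>0$, $u^*\in[0,u_{\max}]$, $u_b\in[0,u_{\max}]$, $C\ge 0$, and consider the problem (P1): $\min_{s\in\mathcal C_a}\{s^2: p(s)\le -C\}$ where $p(s)=g(s,u_b)$. Let $\delta=\min\{u^*,\hat u\}$, $m=\frac{2u^*+u_{\max}}4$. (i) If $u^*\ne\hat u$: $p'<0$ on $[0,\delta)\cup(\gamma,u_{\max}]$ and $p'>0$ on $(\delta,\gamma)$, where $\gamma=\max\{u^*,\hat u\}$. Moreover: if $p(0)\le -C$, the optimal solution of (P1) is $s=0$; if $p(\delta)\le -C<p(0)$, the optimal solution is the smallest root of $p(s)=-C$ in $\mathcal C_a$ (which lies in $(0,\delta]$); if $-C<p(\delta)$, (P1) is infeasible. (ii) If $u^*=\hat u$: $p'<0$ on $[0,u_{\max}]\setminus\{\hat u\}$ and $p'(\hat u)=0$. Moreover: if $p(0)\le -C$, the optimal solution is $s=0$; if $p(m)\le -C<p(0)$, the optimal solution is the unique root of $p(s)=-C$ in $(0,m]$; if $-C<p(m)$, (P1) is infeasible.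
   Context: $f(u)=u(1-u/u_{\max})$ on $[0,u_{\max}]$, $\hat u=u_{\max}/2$ its unique maximizer, $F$ a primitive of $f$, $g(s,z)=(s-u^* )f(s)-(z-u^* )f(z)-F(s)+F(z)$, and $\mathcal C_a=[0,\frac{2u^*+u_{\max}}4]$. *)

theory Defs
  imports "HOL-Analysis.Analysis"
begin

definition flux :: "real \<Rightarrow> real \<Rightarrow> real" where
  "flux umax u = u * (1 - u / umax)"

definition uhat :: "real \<Rightarrow> real" where
  "uhat umax = umax / 2"

definition gfun :: "real \<Rightarrow> real \<Rightarrow> (real \<Rightarrow> real) \<Rightarrow> real \<Rightarrow> real \<Rightarrow> real" where
  "gfun umax ustar F s z =
     (s - ustar) * flux umax s - (z - ustar) * flux umax z - F s + F z"

definition Ca :: "real \<Rightarrow> real \<Rightarrow> real set" where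
  "Ca umax ustar = {0 .. (2 * ustar + umax) / 4}"

definition feasP1 :: "(real \<Rightarrow> real) \<Rightarrow> real set \<Rightarrow> real \<Rightarrow> real set" where
  "feasP1 p A C = {s \<in> A. p s \<le> - C}"

definition optP1 :: "(real \<Rightarrow> real) \<Rightarrow> real set \<Rightarrow> real \<Rightarrow> real set" where
  "optP1 p A C = {s. is_arg_min (\<lambda>x. x^2) (\<lambda>x. x \<in> feasP1 p A C) s}"

end

theory Submission
  imports Defs
begin

lemma dec_lem:
  fixes p d :: "real \<Rightarrow> real"
  assumes D: "\<And>x. (p has_real_derivative d x) (at x)" and ab: "a < b"
    and neg: "\<And>x. a < x \<Longrightarrow> x < b \<Longrightarrow> d x < 0"
  shows "p b < p a"
proof (rule DERIV_neg_imp_decreasing_open[OF ab])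
  show "\<And>x. a < x \<Longrightarrow> x < b \<Longrightarrow> \<exists>y. DERIV p x :> y \<and> y < 0"
    using D neg by blast
  show "continuous_on {a..b} p"
    using D by (meson DERIV_isCont continuous_at_imp_continuous_on)
qed

lemma inc_lem:
  fixes p d :: "real \<Rightarrow> real"
  assumes D: "\<And>x. (p has_real_derivative d x) (at x)" and ab: "a < b"
    and pos: "\<And>x. a < x \<Longrightarrow> x < b \<Longrightarrow> d x > 0"
  shows "p a < p b"
proof (rule DERIV_pos_imp_increasing_open[OF ab])
  show "\<And>x. a < x \<Longrightarrow> x < b \<Longrightarrow> \<exists>y. DERIV p x :> y \<and> y > 0"
    using D pos by blast
  show "continuous_on {a..b} p"
    using D by (meson DERIV_isCont continuous_at_imp_continuous_on)
qed

lemma opt_lem: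
  assumes "r \<ge> 0" "r \<in> feasP1 p A C" "\<And>s. s \<in> feasP1 p A C \<Longrightarrow> r \<le> s"
  shows "optP1 p A C = {r}"
proof -
  have "is_arg_min (\<lambda>x. x^2) (\<lambda>x. x \<in> feasP1 p A C) s \<longleftrightarrow> s = r" for s :: real
  proof
    assume h: "is_arg_min (\<lambda>x. x^2) (\<lambda>x. x \<in> feasP1 p A C) s"
    hence sf: "s \<in> feasP1 p A C" and nl: "\<not> r^2 < s^2" using assms(2) unfolding is_arg_min_def by auto
    have "r \<le> s" using assms(3) sf .
    moreover have "s \<le> r" using nl assms(1) \<open>r \<le> s\<close>
      by (meson not_less order_trans power_strict_mono zero_less_numeral)
    ultimately show "s = r" by simp
  next
    assume "s = r"
    thus "is_arg_min (\<lambda>x. x^2) (\<lambda>x. x \<in> feasP1 p A C) s"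
      unfolding is_arg_min_def using assms
      by (smt (verit, ccfv_SIG) power_mono)
  qed
  thus ?thesis unfolding optP1_def by auto
qed


theorem mainTheorem4:
  fixes umax ustar ub C :: real and F :: "real \<Rightarrow> real"
  assumes umax_pos: "umax > 0"
    and ustar: "ustar \<in> {0..umax}"
    and ub: "ub \<in> {0..umax}"
    and C: "C \<ge> 0"
    and F_prim: "\<forall>x. (F has_real_derivative flux umax x) (at x)"
  defines "p \<equiv> (\<lambda>s. gfun umax ustar F s ub)"
    and "\<delta> \<equiv> min ustar (uhat umax)"
    and "\<gamma> \<equiv> max ustar (uhat umax)"
    and "m \<equiv> (2 * ustar + umax) / 4"
  shows
   "(ustar \<noteq> uhat umax \<longrightarrow>
      (\<forall>s \<in> {0..<\<delta>} \<union> {\<gamma><..umax}. deriv p s < 0) \<and>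
      (\<forall>s \<in> {\<delta><..<\<gamma>}. deriv p s > 0) \<and>
      (p 0 \<le> - C \<longrightarrow> optP1 p (Ca umax ustar) C = {0}) \<and>
      (p \<delta> \<le> - C \<and> - C < p 0 \<longrightarrow>
         (\<exists>r. r \<in> {0<..\<delta>} \<and> r \<in> Ca umax ustar \<and> p r = - C \<and>
              (\<forall>s \<in> Ca umax ustar. p s = - C \<longrightarrow> r \<le> s) \<and>
              optP1 p (Ca umax ustar) C = {r})) \<and>
      (- C < p \<delta> \<longrightarrow> feasP1 p (Ca umax ustar) C = {}))
    \<and>
    (ustar = uhat umax \<longrightarrow>
      (\<forall>s \<in> {0..umax} - {uhat umax}. deriv p s < 0) \<and>
      deriv p (uhat umax) = 0 \<and>
      (p 0 \<le> - C \<longrightarrow> optP1 p (Ca umax ustar) C = {0}) \<and>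
      (p m \<le> - C \<and> - C < p 0 \<longrightarrow>
         (\<exists>r. r \<in> {0<..m} \<and> p r = - C \<and>
              (\<forall>s \<in> {0<..m}. p s = - C \<longrightarrow> s = r) \<and>
              optP1 p (Ca umax ustar) C = {r})) \<and>
      (- C < p m \<longrightarrow> feasP1 p (Ca umax ustar) C = {}))"

proof -
  define d where "d = (\<lambda>s. (s - ustar) * (1 - 2 * s / umax))"
  have D: "\<And>x. (p has_real_derivative d x) (at x)"
  proof -
    fix x
    have "((\<lambda>s. (s - ustar) * (s * (1 - s / umax)) - (ub - ustar) * flux umax ub - F s + F ub)
       has_real_derivative d x) (at x)"
      using umax_pos
      by (auto intro!: derivative_eq_intros F_prim[rule_format] simp: d_def flux_def field_simps)
    thus "(p has_real_derivative d x) (at x)"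
      unfolding p_def gfun_def flux_def by simp
  qed
  have dp: "\<And>s. deriv p s = d s" using D DERIV_imp_deriv by blast
  have cont: "\<And>x. isCont p x" using D DERIV_isCont by blast
  have pos1: "\<And>s. s < umax / 2 \<Longrightarrow> 1 - 2 * s / umax > 0" using umax_pos by (simp add: field_simps)
  have neg1: "\<And>s. s > umax / 2 \<Longrightarrow> 1 - 2 * s / umax < 0" using umax_pos by (simp add: field_simps)
  have zer1: "1 - 2 * (umax/2) / umax = 0" using umax_pos by simp
  have uh: "uhat umax = umax / 2" by (simp add: uhat_def)
  have Ca: "Ca umax ustar = {0..m}" unfolding Ca_def m_def by simp
  have feas: "\<And>s. s \<in> feasP1 p (Ca umax ustar) C \<longleftrightarrow> s \<in> {0..m} \<and> p s \<le> - C"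
    unfolding feasP1_def Ca by auto
  have m0: "m > 0" using ustar umax_pos unfolding m_def by auto
  have opt0: "p 0 \<le> - C \<Longrightarrow> optP1 p (Ca umax ustar) C = {0}"
    by (rule opt_lem) (use feas m0 in auto)
  show ?thesis
  proof (intro conjI impI)
    assume ne: "ustar \<noteq> uhat umax"
    have dl: "\<delta> < m" "m < \<gamma>" "0 \<le> \<delta>" using ne ustar umax_pos
      unfolding \<delta>_def \<gamma>_def m_def uh by auto
    have dneg: "d s < 0" if "s < \<delta> \<or> s > \<gamma>" for s
    proof (cases "s < \<delta>")
      case True
      hence "s - ustar < 0" "1 - 2 * s / umax > 0" using pos1 unfolding \<delta>_def uh by auto
      thus ?thesis unfolding d_def by (simp add: mult_neg_pos)
    next
      case False
      hence "s > \<gamma>" using that by auto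
      hence "s - ustar > 0" "1 - 2 * s / umax < 0" using neg1 unfolding \<gamma>_def uh by auto
      thus ?thesis unfolding d_def by (simp add: mult_pos_neg)
    qed
    have dpos: "d s > 0" if "\<delta> < s" "s < \<gamma>" for s
    proof (cases "ustar < umax / 2")
      case True
      hence "s - ustar > 0" "1 - 2 * s / umax > 0" using that pos1 unfolding \<delta>_def \<gamma>_def uh by auto
      thus ?thesis unfolding d_def by simp
    next
      case False
      hence "s - ustar < 0" "1 - 2 * s / umax < 0" using that neg1 unfolding \<delta>_def \<gamma>_def uh by auto
      thus ?thesis unfolding d_def by (simp add: mult_neg_neg)
    qed
    show "\<forall>s \<in> {0..<\<delta>} \<union> {\<gamma><..umax}. deriv p s < 0" using dneg dp by auto
    show "\<forall>s \<in> {\<delta><..<\<gamma>}. deriv p s > 0" using dpos dp by auto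
    show "p 0 \<le> - C \<Longrightarrow> optP1 p (Ca umax ustar) C = {0}" by (rule opt0)
    have dec: "p b < p a" if "a < b" "b \<le> \<delta>" for a b
      by (rule dec_lem[OF D that(1)]) (use that dneg in auto)
    have inc: "p a < p b" if "\<delta> \<le> a" "a < b" "b \<le> \<gamma>" for a b
      by (rule inc_lem[OF D that(2)]) (use that dpos in auto)
    have lower: "p \<delta> \<le> p s" if "s \<in> {0..m}" for s
    proof (cases "s \<le> \<delta>")
      case True thus ?thesis using dec[of s \<delta>] by (cases "s = \<delta>") auto
    next
      case False thus ?thesis using inc[of \<delta> s] that dl by auto
    qed
    show "\<exists>r. r \<in> {0<..\<delta>} \<and> r \<in> Ca umax ustar \<and> p r = - C \<and>
              (\<forall>s \<in> Ca umax ustar. p s = - C \<longrightarrow> r \<le> s) \<and>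
              optP1 p (Ca umax ustar) C = {r}" if h: "p \<delta> \<le> - C \<and> - C < p 0"
    proof -
      obtain r where r: "0 \<le> r" "r \<le> \<delta>" "p r = - C"
        using IVT2[of p \<delta> "-C" 0] h dl cont by auto
      have r0: "r > 0" using r h by (cases "r = 0") auto
      have small: "r \<le> s" if "s \<in> {0..m}" "p s \<le> - C" for s
      proof (rule ccontr)
        assume "\<not> r \<le> s"
        hence "p r < p s" using dec[of s r] r by auto
        thus False using that r by auto
      qed
      show ?thesis
      proof (intro exI conjI ballI impI)
        show "r \<in> {0<..\<delta>}" using r r0 by auto
        show "r \<in> Ca umax ustar" using Ca r dl by auto
        show "p r = - C" by (rule r(3))
        show "r \<le> s" if "s \<in> Ca umax ustar" "p s = - C" for s using small that Ca by auto
        show "optP1 p (Ca umax ustar) C = {r}"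
          by (rule opt_lem) (use r dl feas small in auto)
      qed
    qed
    show "feasP1 p (Ca umax ustar) C = {}" if "- C < p \<delta>"
      using feas lower that by force
  next
    assume eq: "ustar = uhat umax"
    have dneg: "d s < 0" if "s \<noteq> umax / 2" for s
    proof (cases "s < umax / 2")
      case True
      hence "s - ustar < 0" "1 - 2 * s / umax > 0" using pos1 eq uh by auto
      thus ?thesis unfolding d_def by (simp add: mult_neg_pos)
    next
      case False
      hence "s - ustar > 0" "1 - 2 * s / umax < 0" using that neg1 eq uh by auto
      thus ?thesis unfolding d_def by (simp add: mult_pos_neg)
    qed
    show "\<forall>s \<in> {0..umax} - {uhat umax}. deriv p s < 0" using dneg dp uh by auto
    show "deriv p (uhat umax) = 0" using dp uh eq umax_pos unfolding d_def by simp
    show "p 0 \<le> - C \<Longrightarrow> optP1 p (Ca umax ustar) C = {0}" by (rule opt0)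
    have dec0: "p b < p a" if "a < b" "b \<le> umax/2 \<or> a \<ge> umax/2" for a b
      by (rule dec_lem[OF D that(1)]) (use that dneg in force)
    have dec: "p b < p a" if "a < b" for a b
    proof (cases "b \<le> umax/2 \<or> a \<ge> umax/2")
      case True thus ?thesis using dec0 that by auto
    next
      case False thus ?thesis using dec0[of a "umax/2"] dec0[of "umax/2" b] by auto
    qed
    have mm: "m = umax / 2" using eq uh unfolding m_def by simp
    show "\<exists>r. r \<in> {0<..m} \<and> p r = - C \<and>
              (\<forall>s \<in> {0<..m}. p s = - C \<longrightarrow> s = r) \<and>
              optP1 p (Ca umax ustar) C = {r}" if h: "p m \<le> - C \<and> - C < p 0"
    proof -
      obtain r where r: "0 \<le> r" "r \<le> m" "p r = - C"
        using IVT2[of p m "-C" 0] h m0 cont by auto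
      have r0: "r > 0" using r h by (cases "r = 0") auto
      have small: "r \<le> s" if "p s \<le> - C" for s
      proof (rule ccontr)
        assume "\<not> r \<le> s"
        hence "p r < p s" using dec[of s r] r by auto
        thus False using that r by auto
      qed
      show ?thesis
      proof (intro exI conjI ballI impI)
        show "r \<in> {0<..m}" using r r0 by auto
        show "p r = - C" by (rule r(3))
        show "s = r" if "s \<in> {0<..m}" "p s = - C" for s
          using dec[of s r] dec[of r s] that r by (cases s r rule: linorder_cases) auto
        show "optP1 p (Ca umax ustar) C = {r}"
          by (rule opt_lem) (use r feas small in auto)
      qed
    qed
    show "feasP1 p (Ca umax ustar) C = {}" if "- C < p m"
    proof -
      have "p m \<le> p s" if "s \<in> {0..m}" for s using dec[of s m] that by (cases "s = m") auto
      thus ?thesis using feas that by force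
    qed
  qed
qed

end
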